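(* Let $\phi$ be a modal formula and $\Psi$ the set of its subformulas. If $\phi$ is satisfiable in the frame $(\mathbb{R},R_{>1})$ under some valuation, then $\phi$ is satisfiable in $(\mathbb{R},R_{>1})$ under a special valuation (with respect to $\Psi$).
   Context: Modal formulas are built from propositional variables using $\bot$, $\to$ and one unary modality $\lozenge$. In the frame $(\mathbb{R},R_{>1})$, $xR_{>1}y$ iff $|x-y|>1$. A valuation $v$ assigns subsets of $\mathbb{R}$ to variables and extends to $\overline{v}(\varphi)=\{x: x\models_v\varphi\}$, where $x\models_v\lozenge\varphi$ iff some $y$ with $|x-y|>1$ satisfies $\varphi$. A formula is satisfiable under $v$ if $\overline{v}(\phi)\ne\emptyset$. For a valuation $v$, let $B_v$ be the Boolean subalgebra of the powerset of $\mathbb{R}$ generated by $\{\overline{v}(\psi):\psi\in\Psi\}$, and let $X_v$ be the set of all real numbers that arise as infima or suprema of members of $B_v$. The valuation $v$ is called special if $X_v\subseteq\mathbb{Q}$. *)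

theory Defs
  imports Complex_Main
begin

datatype 'a fm = Var 'a | Bot | Imp "'a fm" "'a fm" | Dia "'a fm"

fun sat :: "('a \<Rightarrow> real set) \<Rightarrow> real \<Rightarrow> 'a fm \<Rightarrow> bool" where
  "sat v x (Var p) = (x \<in> v p)"
| "sat v x Bot = False"
| "sat v x (Imp a b) = (sat v x a \<longrightarrow> sat v x b)"
| "sat v x (Dia a) = (\<exists>y. \<bar>x - y\<bar> > 1 \<and> sat v y a)"

definition ext :: "('a \<Rightarrow> real set) \<Rightarrow> 'a fm \<Rightarrow> real set" where
  "ext v \<phi> = {x. sat v x \<phi>}"

fun subfms :: "'a fm \<Rightarrow> 'a fm set" where
  "subfms (Var p) = {Var p}"
| "subfms Bot = {Bot}"
| "subfms (Imp a b) = insert (Imp a b) (subfms a \<union> subfms b)"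
| "subfms (Dia a) = insert (Dia a) (subfms a)"

inductive_set bool_gen :: "real set set \<Rightarrow> real set set" for G where
  gen: "A \<in> G \<Longrightarrow> A \<in> bool_gen G"
| empty: "{} \<in> bool_gen G"
| compl: "A \<in> bool_gen G \<Longrightarrow> - A \<in> bool_gen G"
| union: "A \<in> bool_gen G \<Longrightarrow> B \<in> bool_gen G \<Longrightarrow> A \<union> B \<in> bool_gen G"

definition B_v :: "'a fm set \<Rightarrow> ('a \<Rightarrow> real set) \<Rightarrow> real set set" where
  "B_v \<Psi> v = bool_gen ((\<lambda>\<psi>. ext v \<psi>) ` \<Psi>)"

definition is_inf :: "real \<Rightarrow> real set \<Rightarrow> bool" where
  "is_inf r A \<longleftrightarrow> A \<noteq> {} \<and> (\<forall>a\<in>A. r \<le> a) \<and> (\<forall>s. (\<forall>a\<in>A. s \<le> a) \<longrightarrow> s \<le> r)"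

definition is_sup :: "real \<Rightarrow> real set \<Rightarrow> bool" where
  "is_sup r A \<longleftrightarrow> A \<noteq> {} \<and> (\<forall>a\<in>A. a \<le> r) \<and> (\<forall>s. (\<forall>a\<in>A. a \<le> s) \<longrightarrow> r \<le> s)"

definition X_v :: "'a fm set \<Rightarrow> ('a \<Rightarrow> real set) \<Rightarrow> real set" where
  "X_v \<Psi> v = {r. \<exists>A\<in>B_v \<Psi> v. is_inf r A \<or> is_sup r A}"

definition special :: "'a fm set \<Rightarrow> ('a \<Rightarrow> real set) \<Rightarrow> bool" where
  "special \<Psi> v \<longleftrightarrow> X_v \<Psi> v \<subseteq> \<rat>"

end

theory Submission
  imports Defs
begin


lemma side_left:
  fixes r q :: "real \<Rightarrow> real" and A :: "real set"
  assumes ne: "A \<noteq> {}" and bd: "bdd_below A"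
  and R1: "\<And>x. r x < Inf A \<longleftrightarrow> x < q (Inf A)"
  and R1b: "\<And>x. Inf A + 1 < r x \<longleftrightarrow> q (Inf A) + 1 < x"
  and at: "r (q (Inf A)) = Inf A"
  and app: "Inf A \<notin> A \<Longrightarrow> \<forall>\<epsilon>>0. \<exists>x. q (Inf A) < x \<and> x < q (Inf A) + \<epsilon> \<and> r x \<in> A"
  shows "(\<exists>y. y < z - 1 \<and> r y \<in> A) \<longleftrightarrow> (\<exists>y\<in>A. y < r z - 1)"
proof -
  have "(\<exists>y\<in>A. y < r z - 1) \<longleftrightarrow> Inf A < r z - 1" using cInf_less_iff[OF ne bd] by simp
  also have "\<dots> \<longleftrightarrow> q (Inf A) + 1 < z" using R1b[of z] by linarith
  finally have E: "(\<exists>y\<in>A. y < r z - 1) \<longleftrightarrow> q (Inf A) + 1 < z" .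
  show ?thesis unfolding E
  proof
    assume "\<exists>y. y < z - 1 \<and> r y \<in> A"
    then obtain y where y: "y < z - 1" "r y \<in> A" by blast
    have "Inf A \<le> r y" using y(2) bd by (simp add: cInf_lower)
    then have "\<not> y < q (Inf A)" using R1[of y] by linarith
    then show "q (Inf A) + 1 < z" using y by linarith
  next
    assume z: "q (Inf A) + 1 < z"
    show "\<exists>y. y < z - 1 \<and> r y \<in> A"
    proof (cases "Inf A \<in> A")
      case True then show ?thesis using z at by (intro exI[of _ "q (Inf A)"]) auto
    next
      case False
      have "z - 1 - q (Inf A) > 0" using z by linarith
      from app[OF False, rule_format, OF this]
      obtain x where "q (Inf A) < x" "x < q (Inf A) + (z - 1 - q (Inf A))" "r x \<in> A" by blast
      then have "x < z - 1" "r x \<in> A" by linarith+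
      then show ?thesis by blast
    qed
  qed
qed

lemma side_right:
  fixes r q :: "real \<Rightarrow> real" and A :: "real set"
  assumes ne: "A \<noteq> {}" and bd: "bdd_above A"
  and R1: "\<And>x. Sup A < r x \<longleftrightarrow> q (Sup A) < x"
  and R1b: "\<And>x. r x < Sup A - 1 \<longleftrightarrow> x < q (Sup A) - 1"
  and at: "r (q (Sup A)) = Sup A"
  and app: "Sup A \<notin> A \<Longrightarrow> \<forall>\<epsilon>>0. \<exists>x. q (Sup A) - \<epsilon> < x \<and> x < q (Sup A) \<and> r x \<in> A"
  shows "(\<exists>y. z + 1 < y \<and> r y \<in> A) \<longleftrightarrow> (\<exists>y\<in>A. r z + 1 < y)"
proof -
  have "(\<exists>y\<in>A. r z + 1 < y) \<longleftrightarrow> r z + 1 < Sup A" using less_cSup_iff[OF ne bd] by simp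
  also have "\<dots> \<longleftrightarrow> z < q (Sup A) - 1" using R1b[of z] by linarith
  finally have E: "(\<exists>y\<in>A. r z + 1 < y) \<longleftrightarrow> z < q (Sup A) - 1" .
  show ?thesis unfolding E
  proof
    assume "\<exists>y. z + 1 < y \<and> r y \<in> A"
    then obtain y where y: "z + 1 < y" "r y \<in> A" by blast
    have "r y \<le> Sup A" using y(2) bd by (simp add: cSup_upper)
    then have "\<not> q (Sup A) < y" using R1[of y] by linarith
    then show "z < q (Sup A) - 1" using y by linarith
  next
    assume z: "z < q (Sup A) - 1"
    show "\<exists>y. z + 1 < y \<and> r y \<in> A"
    proof (cases "Sup A \<in> A")
      case True then show ?thesis using z at by (intro exI[of _ "q (Sup A)"]) auto
    next
      case False
      have "q (Sup A) - (z + 1) > 0" using z by linarith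
      from app[OF False, rule_format, OF this]
      obtain x where "q (Sup A) - (q (Sup A) - (z + 1)) < x" "x < q (Sup A)" "r x \<in> A" by blast
      then have "z + 1 < x" "r x \<in> A" by linarith+
      then show ?thesis by blast
    qed
  qed
qed

lemma locconst_inf:
  fixes r :: "real \<Rightarrow> real"
  assumes lc: "\<And>x. x \<notin> \<rat> \<Longrightarrow> \<exists>\<alpha> \<beta>. \<alpha> < x \<and> x < \<beta> \<and> (\<forall>y. \<alpha> < y \<longrightarrow> y < \<beta> \<longrightarrow> r y = r x)"
  and inf: "is_inf z (r -` B)"
  shows "z \<in> \<rat>"
proof (rule ccontr)
  assume "z \<notin> \<rat>"
  then obtain \<alpha> \<beta> where ab: "\<alpha> < z" "z < \<beta>" "\<forall>y. \<alpha> < y \<longrightarrow> y < \<beta> \<longrightarrow> r y = r z" using lc[OF \<open>z \<notin> \<rat>\<close>] by blast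
  have lb: "\<forall>a\<in>r -` B. z \<le> a" using inf unfolding is_inf_def by blast
  have gl: "\<forall>s. (\<forall>a\<in>r -` B. s \<le> a) \<longrightarrow> s \<le> z" using inf unfolding is_inf_def by blast
  show False
  proof (cases "z \<in> r -` B")
    case True
    have "\<alpha> < (\<alpha> + z)/2" using ab(1,2) by simp
    moreover have "(\<alpha> + z)/2 < \<beta>" using ab(1,2) by (simp add: field_simps)
    ultimately have "r ((\<alpha> + z)/2) = r z" using ab(3) by blast
    then have "(\<alpha> + z)/2 \<in> r -` B" using True by auto
    then have "z \<le> (\<alpha> + z)/2" using lb by blast
    then show False using ab(1,2) by (simp add: field_simps)
  next
    case False
    have "\<not> (\<forall>a\<in>r -` B. \<beta> \<le> a)"
    proof
      assume "\<forall>a\<in>r -` B. \<beta> \<le> a"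
      then have "\<beta> \<le> z" using gl by blast
      then show False using ab by linarith
    qed
    then obtain a where a: "a \<in> r -` B" "a < \<beta>" by (auto simp: not_le)
    have "z \<le> a" using lb a by auto
    then have "z < a" using a False by (cases "z = a") auto
    then have "\<alpha> < a" using ab(1) by linarith
    then have "r a = r z" using ab(3) a(2) by blast
    then show False using a False by auto
  qed
qed

lemma locconst_sup:
  fixes r :: "real \<Rightarrow> real"
  assumes lc: "\<And>x. x \<notin> \<rat> \<Longrightarrow> \<exists>\<alpha> \<beta>. \<alpha> < x \<and> x < \<beta> \<and> (\<forall>y. \<alpha> < y \<longrightarrow> y < \<beta> \<longrightarrow> r y = r x)"
  and sup: "is_sup z (r -` B)"
  shows "z \<in> \<rat>"
proof (rule ccontr)
  assume "z \<notin> \<rat>"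
  then obtain \<alpha> \<beta> where ab: "\<alpha> < z" "z < \<beta>" "\<forall>y. \<alpha> < y \<longrightarrow> y < \<beta> \<longrightarrow> r y = r z" using lc[OF \<open>z \<notin> \<rat>\<close>] by blast
  have ub: "\<forall>a\<in>r -` B. a \<le> z" using sup unfolding is_sup_def by blast
  have gl: "\<forall>s. (\<forall>a\<in>r -` B. a \<le> s) \<longrightarrow> z \<le> s" using sup unfolding is_sup_def by blast
  show False
  proof (cases "z \<in> r -` B")
    case True
    have "\<alpha> < (\<beta> + z)/2" using ab(1,2) by simp
    moreover have "(\<beta> + z)/2 < \<beta>" using ab(1,2) by (simp add: field_simps)
    ultimately have "r ((\<beta> + z)/2) = r z" using ab(3) by blast
    then have "(\<beta> + z)/2 \<in> r -` B" using True by auto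
    then have "(\<beta> + z)/2 \<le> z" using ub by blast
    then show False using ab(1,2) by (simp add: field_simps)
  next
    case False
    have "\<not> (\<forall>a\<in>r -` B. a \<le> \<alpha>)"
    proof
      assume "\<forall>a\<in>r -` B. a \<le> \<alpha>"
      then have "z \<le> \<alpha>" using gl by blast
      then show False using ab by linarith
    qed
    then obtain a where a: "a \<in> r -` B" "\<alpha> < a" by (auto simp: not_le)
    have "a \<le> z" using ub a by auto
    then have "a < z" using a False by (cases "z = a") auto
    then have "a < \<beta>" using ab(2) by linarith
    then have "r a = r z" using ab(3) a(2) by blast
    then show False using a False by auto
  qed
qed

lemma bool_gen_preimage:
  assumes "A \<in> bool_gen G" and "\<And>X. X \<in> G \<Longrightarrow> \<exists>B. X = r -` B"
  shows "\<exists>B. A = r -` B"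
  using assms(1)
proof (induction rule: bool_gen.induct)
  case (gen A) then show ?case using assms(2) by blast
next
  case empty then show ?case by (intro exI[of _ "{}"]) auto
next
  case (compl A)
  then obtain B where "A = r -` B" by blast
  then show ?case by (intro exI[of _ "- B"]) auto
next
  case (union A C)
  then obtain B B' where "A = r -` B" "C = r -` B'" by blast
  then show ?case by (intro exI[of _ "B \<union> B'"]) auto
qed

lemma finite_subfms: "finite (subfms \<phi>)"
  by (induction \<phi>) auto

lemma self_subfms: "\<phi> \<in> subfms \<phi>"
  by (cases \<phi>) auto

lemma sat_transfer:
  fixes r :: "real \<Rightarrow> real" and v :: "'a \<Rightarrow> real set"
  assumes good: "\<And>a. Dia a \<in> subfms \<psi> \<Longrightarrow>
     (\<forall>x. (\<exists>y. \<bar>x - y\<bar> > 1 \<and> r y \<in> ext v a) \<longleftrightarrow> (\<exists>y\<in>ext v a. \<bar>r x - y\<bar> > 1))"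
  shows "sat (\<lambda>p. r -` v p) x \<psi> \<longleftrightarrow> sat v (r x) \<psi>"
  using good
proof (induction \<psi> arbitrary: x)
  case (Var p) then show ?case by simp
next
  case Bot then show ?case by simp
next
  case (Imp a b)
  then show ?case by simp
next
  case (Dia a)
  have IH: "\<And>y. sat (\<lambda>p. r -` v p) y a \<longleftrightarrow> sat v (r y) a" using Dia by auto
  have g: "(\<exists>y. \<bar>x - y\<bar> > 1 \<and> r y \<in> ext v a) \<longleftrightarrow> (\<exists>y\<in>ext v a. \<bar>r x - y\<bar> > 1)"
    using Dia.prems[of a] by simp
  have "sat (\<lambda>p. r -` v p) x (Dia a) \<longleftrightarrow> (\<exists>y. \<bar>x - y\<bar> > 1 \<and> r y \<in> ext v a)"
    using IH by (simp add: ext_def)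
  also have "\<dots> \<longleftrightarrow> (\<exists>y\<in>ext v a. \<bar>r x - y\<bar> > 1)" using g .
  also have "\<dots> \<longleftrightarrow> sat v (r x) (Dia a)" unfolding ext_def by (simp; blast)
  finally show ?case .
qed



lemma inv_floor_bounds:
  fixes d :: real
  assumes "0 < d" "d \<notin> \<rat>"
  shows "of_int \<lfloor>1/d\<rfloor> < 1/d" "1/d < of_int \<lfloor>1/d\<rfloor> + 1"
proof -
  have nq: "1/d \<notin> \<rat>"
  proof
    assume "1/d \<in> \<rat>"
    then have "1/(1/d) \<in> \<rat>" by (rule Rats_divide[OF Rats_1])
    then show False using assms by simp
  qed
  have "of_int \<lfloor>1/d\<rfloor> \<le> 1/d" by (rule of_int_floor_le)
  moreover have "of_int \<lfloor>1/d\<rfloor> \<noteq> 1/d" using nq Rats_of_int by metis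
  ultimately show "of_int \<lfloor>1/d\<rfloor> < 1/d" by linarith
  show "1/d < of_int \<lfloor>1/d\<rfloor> + 1" by linarith
qed

lemma floor_inv_eq:
  fixes d :: real and k :: int
  assumes "0 < k" "1 / (of_int k + 1) < d" "d < 1 / of_int k"
  shows "\<lfloor>1/d\<rfloor> = k"
proof -
  have kp: "(0::real) < of_int k" using assms(1) by simp
  have dp: "0 < d" using assms(2) kp by (smt (verit) divide_pos_pos)
  have "of_int k < 1/d" using assms(3) kp dp by (simp add: field_simps)
  moreover have "1/d < of_int k + 1" using assms(2) kp dp by (simp add: field_simps)
  ultimately show ?thesis by (simp add: floor_eq_iff)
qed

lemma inv_interval:
  fixes d :: real and k :: int
  assumes "0 < k" "0 < d" "of_int k < 1/d" "1/d < of_int k + 1"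
  shows "1 / (of_int k + 1) < d" "d < 1 / of_int k"
proof -
  have kp: "(0::real) < of_int k" using assms(1) by simp
  show "1 / (of_int k + 1) < d" using assms(4) kp assms(2) by (simp add: field_simps)
  show "d < 1 / of_int k" using assms(3) kp assms(2) by (simp add: field_simps)
qed

locale cons =
  fixes T :: "real set" and q :: "real \<Rightarrow> real" and g e :: real
    and As :: "nat \<Rightarrow> real set" and m :: nat
  assumes finT: "finite T" and neT: "T \<noteq> {}"
  and gpos: "g > 0" and gap: "\<And>t u. t\<in>T \<Longrightarrow> u\<in>T \<Longrightarrow> t < u \<Longrightarrow> t + g \<le> u"
  and epos: "e > 0" and e1: "e < 1" and erat: "e \<in> \<rat>"
  and qgap: "\<And>t u. t\<in>T \<Longrightarrow> u\<in>T \<Longrightarrow> t < u \<Longrightarrow> q t + 2*e < q u"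
  and qrat: "\<And>t. t\<in>T \<Longrightarrow> q t \<in> \<rat>"
  and mpos: "m > 0"
begin

lemma qless: "t\<in>T \<Longrightarrow> u\<in>T \<Longrightarrow> q t < q u \<longleftrightarrow> t < u"
proof -
  assume tu: "t\<in>T" "u\<in>T"
  show ?thesis
  proof (cases t u rule: linorder_cases)
    case less then show ?thesis using qgap[OF tu less] epos by simp
  next
    case equal then show ?thesis by simp
  next
    case greater then show ?thesis using qgap[OF tu(2,1) greater] epos by simp
  qed
qed

lemma qeq: "t\<in>T \<Longrightarrow> u\<in>T \<Longrightarrow> q t = q u \<longleftrightarrow> t = u"
  using qless by (metis less_irrefl linorder_neq_iff)

lemma qle: "t\<in>T \<Longrightarrow> u\<in>T \<Longrightarrow> q t \<le> q u \<longleftrightarrow> t \<le> u"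
  using qless by (meson not_less)

definition Lset :: "real \<Rightarrow> real set" where "Lset x = {t\<in>T. q t < x}"
definition Uset :: "real \<Rightarrow> real set" where "Uset x = {t\<in>T. x < q t}"

definition hh :: "nat \<Rightarrow> real" where "hh k = min (1 / real k) g"

definition Yr :: "real \<Rightarrow> nat \<Rightarrow> real" where
  "Yr t k = (if \<exists>y\<in>As (k mod m). t < y \<and> y < t + hh k
     then (SOME y. y \<in> As (k mod m) \<and> t < y \<and> y < t + hh k) else t + hh k / 2)"
definition Yl :: "real \<Rightarrow> nat \<Rightarrow> real" where
  "Yl t k = (if \<exists>y\<in>As (k mod m). t - hh k < y \<and> y < t
     then (SOME y. y \<in> As (k mod m) \<and> t - hh k < y \<and> y < t) else t - hh k / 2)"
definition Rr :: "nat \<Rightarrow> real" where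
  "Rr n = (if \<exists>y\<in>As n. Max T < y then (SOME y. y \<in> As n \<and> Max T < y) else Max T + 1)"
definition Rl :: "nat \<Rightarrow> real" where
  "Rl n = (if \<exists>y\<in>As n. y < Min T then (SOME y. y \<in> As n \<and> y < Min T) else Min T - 1)"

definition r :: "real \<Rightarrow> real" where
  "r x = (if x \<in> q ` T then (THE t. t \<in> T \<and> q t = x)
    else if Lset x \<noteq> {} \<and> x < q (Max (Lset x)) + e
      then Yr (Max (Lset x)) (nat \<lfloor>1 / (x - q (Max (Lset x)))\<rfloor>)
    else if Uset x \<noteq> {} \<and> q (Min (Uset x)) - e < x
      then Yl (Min (Uset x)) (nat \<lfloor>1 / (q (Min (Uset x)) - x)\<rfloor>)
    else if Lset x = {} then Rl (nat (\<lfloor>x\<rfloor> mod int m))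
    else if Uset x = {} then Rr (nat (\<lfloor>x\<rfloor> mod int m))
    else (Max (Lset x) + Min (Uset x)) / 2)"

lemma hh_pos: "k > 0 \<Longrightarrow> hh k > 0"
  unfolding hh_def using gpos by simp

lemma hh_le: "hh k \<le> g" unfolding hh_def by simp

lemma Yr_bounds: "k > 0 \<Longrightarrow> t < Yr t k \<and> Yr t k < t + g"
proof -
  assume k: "k > 0"
  have h: "0 < hh k" "hh k \<le> g" using hh_pos[OF k] hh_le by auto
  show ?thesis
  proof (cases "\<exists>y\<in>As (k mod m). t < y \<and> y < t + hh k")
    case True
    then have "\<exists>y. y \<in> As (k mod m) \<and> t < y \<and> y < t + hh k" by blast
    then have "(SOME y. y \<in> As (k mod m) \<and> t < y \<and> y < t + hh k) \<in> As (k mod m) \<and>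
       t < (SOME y. y \<in> As (k mod m) \<and> t < y \<and> y < t + hh k) \<and>
       (SOME y. y \<in> As (k mod m) \<and> t < y \<and> y < t + hh k) < t + hh k" by (rule someI_ex)
    then show ?thesis using True h unfolding Yr_def by auto
  next
    case False then show ?thesis using h unfolding Yr_def by auto
  qed
qed

lemma Yr_mem: "\<exists>y\<in>As (k mod m). t < y \<and> y < t + hh k \<Longrightarrow> Yr t k \<in> As (k mod m)"
proof -
  assume H: "\<exists>y\<in>As (k mod m). t < y \<and> y < t + hh k"
  then have "\<exists>y. y \<in> As (k mod m) \<and> t < y \<and> y < t + hh k" by blast
  then have "(SOME y. y \<in> As (k mod m) \<and> t < y \<and> y < t + hh k) \<in> As (k mod m)" by (metis (mono_tags, lifting) someI_ex)
  then show ?thesis using H unfolding Yr_def by simp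
qed

lemma Yl_bounds: "k > 0 \<Longrightarrow> t - g < Yl t k \<and> Yl t k < t"
proof -
  assume k: "k > 0"
  have h: "0 < hh k" "hh k \<le> g" using hh_pos[OF k] hh_le by auto
  show ?thesis
  proof (cases "\<exists>y\<in>As (k mod m). t - hh k < y \<and> y < t")
    case True
    then have "\<exists>y. y \<in> As (k mod m) \<and> t - hh k < y \<and> y < t" by blast
    then have "(SOME y. y \<in> As (k mod m) \<and> t - hh k < y \<and> y < t) \<in> As (k mod m) \<and>
       t - hh k < (SOME y. y \<in> As (k mod m) \<and> t - hh k < y \<and> y < t) \<and>
       (SOME y. y \<in> As (k mod m) \<and> t - hh k < y \<and> y < t) < t" by (rule someI_ex)
    then show ?thesis using True h unfolding Yl_def by auto
  next
    case False then show ?thesis using h unfolding Yl_def by auto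
  qed
qed

lemma Yl_mem: "\<exists>y\<in>As (k mod m). t - hh k < y \<and> y < t \<Longrightarrow> Yl t k \<in> As (k mod m)"
proof -
  assume H: "\<exists>y\<in>As (k mod m). t - hh k < y \<and> y < t"
  then have "\<exists>y. y \<in> As (k mod m) \<and> t - hh k < y \<and> y < t" by blast
  then have "(SOME y. y \<in> As (k mod m) \<and> t - hh k < y \<and> y < t) \<in> As (k mod m)" by (metis (mono_tags, lifting) someI_ex)
  then show ?thesis using H unfolding Yl_def by simp
qed

lemma Rr_bound: "Max T < Rr n"
proof (cases "\<exists>y\<in>As n. Max T < y")
  case True
  then have "\<exists>y. y \<in> As n \<and> Max T < y" by blast
  then have "Max T < (SOME y. y \<in> As n \<and> Max T < y)" by (metis (mono_tags, lifting) someI_ex)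
  then show ?thesis using True unfolding Rr_def by simp
next
  case False then show ?thesis unfolding Rr_def by simp
qed

lemma Rr_mem: "\<exists>y\<in>As n. Max T < y \<Longrightarrow> Rr n \<in> As n"
proof -
  assume H: "\<exists>y\<in>As n. Max T < y"
  then have "\<exists>y. y \<in> As n \<and> Max T < y" by blast
  then have "(SOME y. y \<in> As n \<and> Max T < y) \<in> As n" by (metis (mono_tags, lifting) someI_ex)
  then show ?thesis using H unfolding Rr_def by simp
qed

lemma Rl_bound: "Rl n < Min T"
proof (cases "\<exists>y\<in>As n. y < Min T")
  case True
  then have "\<exists>y. y \<in> As n \<and> y < Min T" by blast
  then have "(SOME y. y \<in> As n \<and> y < Min T) < Min T" by (metis (mono_tags, lifting) someI_ex)
  then show ?thesis using True unfolding Rl_def by simp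
next
  case False then show ?thesis unfolding Rl_def by simp
qed

lemma Rl_mem: "\<exists>y\<in>As n. y < Min T \<Longrightarrow> Rl n \<in> As n"
proof -
  assume H: "\<exists>y\<in>As n. y < Min T"
  then have "\<exists>y. y \<in> As n \<and> y < Min T" by blast
  then have "(SOME y. y \<in> As n \<and> y < Min T) \<in> As n" by (metis (mono_tags, lifting) someI_ex)
  then show ?thesis using H unfolding Rl_def by simp
qed

lemma finL: "finite (Lset x)" unfolding Lset_def using finT by simp
lemma finU: "finite (Uset x)" unfolding Uset_def using finT by simp
lemma LsubT: "Lset x \<subseteq> T" unfolding Lset_def by auto
lemma UsubT: "Uset x \<subseteq> T" unfolding Uset_def by auto

lemma MaxL: "Lset x \<noteq> {} \<Longrightarrow> Max (Lset x) \<in> T \<and> q (Max (Lset x)) < x"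
proof -
  assume "Lset x \<noteq> {}"
  then have "Max (Lset x) \<in> Lset x" using finL Max_in by blast
  then show ?thesis unfolding Lset_def by simp
qed

lemma MinU: "Uset x \<noteq> {} \<Longrightarrow> Min (Uset x) \<in> T \<and> x < q (Min (Uset x))"
proof -
  assume "Uset x \<noteq> {}"
  then have "Min (Uset x) \<in> Uset x" using finU Min_in by blast
  then show ?thesis unfolding Uset_def by simp
qed

lemma LorU: "x \<notin> q ` T \<Longrightarrow> t \<in> T \<Longrightarrow> t \<in> Lset x \<or> t \<in> Uset x"
  unfolding Lset_def Uset_def by (metis (mono_tags, lifting) image_eqI linorder_neq_iff mem_Collect_eq)

lemma inL_le: "t \<in> Lset x \<Longrightarrow> t \<le> Max (Lset x)" using finL by simp
lemma inU_ge: "t \<in> Uset x \<Longrightarrow> Min (Uset x) \<le> t" using finU by simp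

lemma notL_gt: "x \<notin> q ` T \<Longrightarrow> t \<in> T \<Longrightarrow> Lset x \<noteq> {} \<Longrightarrow> Max (Lset x) < t \<Longrightarrow> x < q t"
proof -
  assume a: "x \<notin> q ` T" "t \<in> T" "Lset x \<noteq> {}" "Max (Lset x) < t"
  have "t \<notin> Lset x" using inL_le a(4) by force
  then have "t \<in> Uset x" using LorU a by blast
  then show ?thesis unfolding Uset_def by simp
qed

lemma notU_lt: "x \<notin> q ` T \<Longrightarrow> t \<in> T \<Longrightarrow> Uset x \<noteq> {} \<Longrightarrow> t < Min (Uset x) \<Longrightarrow> q t < x"
proof -
  assume a: "x \<notin> q ` T" "t \<in> T" "Uset x \<noteq> {}" "t < Min (Uset x)"
  have "t \<notin> Uset x" using inU_ge a(4) by force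
  then have "t \<in> Lset x" using LorU a by blast
  then show ?thesis unfolding Lset_def by simp
qed

lemma LU_order: "x \<notin> q ` T \<Longrightarrow> Lset x \<noteq> {} \<Longrightarrow> Uset x \<noteq> {} \<Longrightarrow> Max (Lset x) + g \<le> Min (Uset x)"
proof -
  assume a: "x \<notin> q ` T" "Lset x \<noteq> {}" "Uset x \<noteq> {}"
  have "q (Max (Lset x)) < q (Min (Uset x))" using MaxL[OF a(2)] MinU[OF a(3)] by linarith
  then have "Max (Lset x) < Min (Uset x)" using qless MaxL[OF a(2)] MinU[OF a(3)] by blast
  then show ?thesis using gap MaxL[OF a(2)] MinU[OF a(3)] by blast
qed

lemma r_at: "t \<in> T \<Longrightarrow> r (q t) = t"
proof -
  assume t: "t \<in> T"
  have "(THE u. u \<in> T \<and> q u = q t) = t"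
    by (rule the_equality) (use t qeq in auto)
  then show ?thesis unfolding r_def using t by simp
qed

lemma r_nr: "x \<notin> q ` T \<Longrightarrow> Lset x \<noteq> {} \<Longrightarrow> x < q (Max (Lset x)) + e \<Longrightarrow>
   r x = Yr (Max (Lset x)) (nat \<lfloor>1 / (x - q (Max (Lset x)))\<rfloor>)"
  unfolding r_def by simp

lemma r_nl: "x \<notin> q ` T \<Longrightarrow> \<not> (Lset x \<noteq> {} \<and> x < q (Max (Lset x)) + e) \<Longrightarrow> Uset x \<noteq> {} \<Longrightarrow>
   q (Min (Uset x)) - e < x \<Longrightarrow> r x = Yl (Min (Uset x)) (nat \<lfloor>1 / (q (Min (Uset x)) - x)\<rfloor>)"
  unfolding r_def by auto

lemma r_lr: "x \<notin> q ` T \<Longrightarrow> \<not> (Uset x \<noteq> {} \<and> q (Min (Uset x)) - e < x) \<Longrightarrow> Lset x = {} \<Longrightarrow>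
   r x = Rl (nat (\<lfloor>x\<rfloor> mod int m))"
  unfolding r_def by auto

lemma r_rr: "x \<notin> q ` T \<Longrightarrow> \<not> (Lset x \<noteq> {} \<and> x < q (Max (Lset x)) + e) \<Longrightarrow> Lset x \<noteq> {} \<Longrightarrow> Uset x = {} \<Longrightarrow>
   r x = Rr (nat (\<lfloor>x\<rfloor> mod int m))"
  unfolding r_def by simp

lemma r_mid: "x \<notin> q ` T \<Longrightarrow> \<not> (Lset x \<noteq> {} \<and> x < q (Max (Lset x)) + e) \<Longrightarrow>
   \<not> (Uset x \<noteq> {} \<and> q (Min (Uset x)) - e < x) \<Longrightarrow> Lset x \<noteq> {} \<Longrightarrow> Uset x \<noteq> {} \<Longrightarrow>
   r x = (Max (Lset x) + Min (Uset x)) / 2"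
  unfolding r_def by simp

lemma nat_floor_pos: "0 < d \<Longrightarrow> d < e \<Longrightarrow> 0 < nat \<lfloor>1 / d\<rfloor>"
proof -
  assume d: "0 < d" "d < e"
  have "1 < 1 / d" using d e1 by (simp add: field_simps)
  then have "1 \<le> \<lfloor>1/d\<rfloor>" by (simp add: le_floor_iff)
  then show ?thesis by simp
qed

lemma r_bounds: "x \<notin> q ` T \<Longrightarrow> (Lset x \<noteq> {} \<longrightarrow> Max (Lset x) < r x) \<and> (Uset x \<noteq> {} \<longrightarrow> r x < Min (Uset x))"
proof -
  assume x: "x \<notin> q ` T"
  show ?thesis
  proof (cases "Lset x \<noteq> {} \<and> x < q (Max (Lset x)) + e")
    case nr: True
    let ?a = "Max (Lset x)"
    have "0 < x - q ?a" using MaxL nr by simp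
    moreover have "x - q ?a < e" using nr by simp
    ultimately have k: "0 < nat \<lfloor>1 / (x - q ?a)\<rfloor>" by (rule nat_floor_pos)
    have rx: "r x = Yr ?a (nat \<lfloor>1 / (x - q ?a)\<rfloor>)" using r_nr x nr by blast
    have b: "?a < r x \<and> r x < ?a + g" using Yr_bounds[OF k] rx by simp
    show ?thesis using b LU_order[OF x] nr by force
  next
    case nnr: False
    show ?thesis
    proof (cases "Uset x \<noteq> {} \<and> q (Min (Uset x)) - e < x")
      case nl: True
      let ?b = "Min (Uset x)"
      have "0 < q ?b - x" using MinU nl by simp
      moreover have "q ?b - x < e" using nl by simp
      ultimately have k: "0 < nat \<lfloor>1 / (q ?b - x)\<rfloor>" by (rule nat_floor_pos)
      have rx: "r x = Yl ?b (nat \<lfloor>1 / (q ?b - x)\<rfloor>)" using r_nl x nl nnr by blast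
      have b: "?b - g < r x \<and> r x < ?b" using Yl_bounds[OF k] rx by simp
      show ?thesis using b LU_order[OF x] nl by force
    next
      case nnl: False
      show ?thesis
      proof (cases "Lset x = {}")
        case True
        have rx: "r x = Rl (nat (\<lfloor>x\<rfloor> mod int m))" using r_lr x nnl True by blast
        have "Uset x \<noteq> {} \<longrightarrow> Min T \<le> Min (Uset x)"
          using UsubT finT by (simp add: Min_antimono)
        moreover have "r x < Min T" using Rl_bound[of "nat (\<lfloor>x\<rfloor> mod int m)"] rx by simp
        ultimately show ?thesis using True by auto
      next
        case Lne: False
        show ?thesis
        proof (cases "Uset x = {}")
          case True
          have rx: "r x = Rr (nat (\<lfloor>x\<rfloor> mod int m))" using r_rr x nnr Lne True by blast
          have "Max (Lset x) \<le> Max T"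
            using LsubT finT Lne by (simp add: Max_mono)
          moreover have "Max T < r x" using Rr_bound[of "nat (\<lfloor>x\<rfloor> mod int m)"] rx by simp
          ultimately show ?thesis using True by auto
        next
          case Une: False
          have rx: "r x = (Max (Lset x) + Min (Uset x)) / 2" using r_mid x nnr nnl Lne Une by blast
          have "Max (Lset x) + g \<le> Min (Uset x)" using LU_order x Lne Une by blast
          then show ?thesis using rx gpos Lne Une by (simp add: field_simps)
        qed
      qed
    qed
  qed
qed

lemma R1: "t \<in> T \<Longrightarrow> (r x < t \<longleftrightarrow> x < q t) \<and> (t < r x \<longleftrightarrow> q t < x)"
proof -
  assume t: "t \<in> T"
  show ?thesis
  proof (cases "x \<in> q ` T")
    case True
    then obtain u where u: "u \<in> T" "x = q u" by blast
    then show ?thesis using r_at qless t by simp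
  next
    case x: False
    have b: "(Lset x \<noteq> {} \<longrightarrow> Max (Lset x) < r x) \<and> (Uset x \<noteq> {} \<longrightarrow> r x < Min (Uset x))"
      using r_bounds[OF x] .
    show ?thesis
    proof (cases "t \<in> Lset x")
      case True
      have "t \<le> Max (Lset x)" using inL_le True .
      moreover have "Max (Lset x) < r x" using b True by blast
      moreover have "q t < x" using True unfolding Lset_def by simp
      ultimately show ?thesis by simp
    next
      case False
      then have tU: "t \<in> Uset x" using LorU x t by blast
      have "Min (Uset x) \<le> t" using inU_ge tU .
      moreover have "r x < Min (Uset x)" using b tU by blast
      moreover have "x < q t" using tU unfolding Uset_def by simp
      ultimately show ?thesis by simp
    qed
  qed
qed

lemma LU_same:
  assumes x: "x \<notin> q ` T"
    and a: "Lset x \<noteq> {} \<Longrightarrow> q (Max (Lset x)) \<le> \<alpha>"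
    and b: "Uset x \<noteq> {} \<Longrightarrow> \<beta> \<le> q (Min (Uset x))"
    and y: "\<alpha> < y" "y < \<beta>"
  shows "Lset y = Lset x \<and> Uset y = Uset x \<and> y \<notin> q ` T"
proof -
  have L1: "t \<in> Lset x \<Longrightarrow> q t < y" for t
  proof -
    assume t: "t \<in> Lset x"
    then have ne: "Lset x \<noteq> {}" by blast
    have "t \<le> Max (Lset x)" using inL_le t .
    then have "q t \<le> q (Max (Lset x))" using qle MaxL[OF ne] t LsubT by blast
    then show ?thesis using a[OF ne] y by linarith
  qed
  have U1: "t \<in> Uset x \<Longrightarrow> y < q t" for t
  proof -
    assume t: "t \<in> Uset x"
    then have ne: "Uset x \<noteq> {}" by blast
    have "Min (Uset x) \<le> t" using inU_ge t .
    then have "q (Min (Uset x)) \<le> q t" using qle MinU[OF ne] t UsubT by blast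
    then show ?thesis using b[OF ne] y by linarith
  qed
  have LU: "t \<in> T \<Longrightarrow> t \<in> Lset x \<or> t \<in> Uset x" for t using LorU x by blast
  have "Lset y = Lset x"
  proof
    show "Lset y \<subseteq> Lset x"
    proof
      fix t assume t: "t \<in> Lset y"
      then have "t \<in> T" "q t < y" unfolding Lset_def by auto
      then show "t \<in> Lset x" using LU U1 by force
    qed
    show "Lset x \<subseteq> Lset y" using L1 LsubT unfolding Lset_def by blast
  qed
  moreover have "Uset y = Uset x"
  proof
    show "Uset y \<subseteq> Uset x"
    proof
      fix t assume t: "t \<in> Uset y"
      then have "t \<in> T" "y < q t" unfolding Uset_def by auto
      then show "t \<in> Uset x" using LU L1 by force
    qed
    show "Uset x \<subseteq> Uset y" using U1 UsubT unfolding Uset_def by blast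
  qed
  moreover have "y \<notin> q ` T"
  proof
    assume "y \<in> q ` T"
    then obtain t where t: "t \<in> T" "y = q t" by blast
    then show False using LU[OF t(1)] L1 U1 by force
  qed
  ultimately show ?thesis by blast
qed

lemma irr_floor: "x \<notin> \<rat> \<Longrightarrow> of_int \<lfloor>x\<rfloor> < x \<and> x < of_int \<lfloor>x\<rfloor> + 1"
proof -
  assume x: "x \<notin> \<rat>"
  have "of_int \<lfloor>x\<rfloor> \<noteq> x" using x Rats_of_int by metis
  moreover have "of_int \<lfloor>x\<rfloor> \<le> x" by (rule of_int_floor_le)
  ultimately show ?thesis by linarith
qed

lemma R2: "x \<notin> \<rat> \<Longrightarrow> \<exists>\<alpha> \<beta>. \<alpha> < x \<and> x < \<beta> \<and> (\<forall>y. \<alpha> < y \<longrightarrow> y < \<beta> \<longrightarrow> r y = r x)"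
proof -
  assume xq: "x \<notin> \<rat>"
  have x: "x \<notin> q ` T" using xq qrat by blast
  show ?thesis
  proof (cases "Lset x \<noteq> {} \<and> x < q (Max (Lset x)) + e")
    case nr: True
    define a where "a = Max (Lset x)"
    have aT: "a \<in> T" and qa: "q a < x" using MaxL nr unfolding a_def by auto
    define d where "d = x - q a"
    have d0: "0 < d" "d < e" using qa nr unfolding d_def a_def by auto
    have dq: "d \<notin> \<rat>"
    proof
      assume "d \<in> \<rat>"
      then have "q a + d \<in> \<rat>" using qrat[OF aT] by (simp add: Rats_add)
      then show False using xq unfolding d_def by simp
    qed
    define k where "k = \<lfloor>1/d\<rfloor>"
    have kb: "of_int k < 1/d" "1/d < of_int k + 1" using inv_floor_bounds[OF d0(1) dq] unfolding k_def by auto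
    have "0 < nat k" using nat_floor_pos[OF d0] unfolding k_def .
    then have k0: "0 < k" by simp
    have di: "1 / (of_int k + 1) < d" "d < 1 / of_int k" using inv_interval[OF k0 d0(1) kb] by auto
    have rx: "r x = Yr a (nat k)" using r_nr[OF x] nr unfolding a_def k_def d_def by simp
    have pos1: "0 < 1 / (of_int k + 1 :: real)" using k0 by simp
    show ?thesis
    proof (intro exI conjI allI impI)
      show "q a + 1 / (of_int k + 1) < x" using di unfolding d_def by linarith
      show "x < min (q a + e) (q a + 1 / of_int k)" using di d0 unfolding d_def by auto
      fix y assume y: "q a + 1 / (of_int k + 1) < y" "y < min (q a + e) (q a + 1 / of_int k)"
      have bU: "min (q a + e) (q a + 1 / of_int k) \<le> q (Min (Uset x))" if ne: "Uset x \<noteq> {}"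
      proof -
        have "a + g \<le> Min (Uset x)" using LU_order[OF x] nr ne unfolding a_def by blast
        then have "a < Min (Uset x)" using gpos by linarith
        then have "q a + 2*e < q (Min (Uset x))" using qgap aT MinU[OF ne] by blast
        then show ?thesis using epos by linarith
      qed
      have same: "Lset y = Lset x \<and> Uset y = Uset x \<and> y \<notin> q ` T"
        by (rule LU_same[OF x _ bU _ y(2)]) (use pos1 y(1) in \<open>auto simp: a_def\<close>)
      have ynr: "Lset y \<noteq> {} \<and> y < q (Max (Lset y)) + e" using same y nr unfolding a_def by auto
      have "\<lfloor>1 / (y - q a)\<rfloor> = k"
        by (rule floor_inv_eq[OF k0]) (use y in auto)
      then have "r y = Yr a (nat k)" using r_nr[of y] same ynr unfolding a_def by simp
      then show "r y = r x" using rx by simp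
    qed
  next
    case nnr: False
    show ?thesis
    proof (cases "Uset x \<noteq> {} \<and> q (Min (Uset x)) - e < x")
      case nl: True
      define b where "b = Min (Uset x)"
      have bT: "b \<in> T" and qb: "x < q b" using MinU nl unfolding b_def by auto
      define d where "d = q b - x"
      have d0: "0 < d" "d < e" using qb nl unfolding d_def b_def by auto
      have dq: "d \<notin> \<rat>"
      proof
        assume "d \<in> \<rat>"
        then have "q b - d \<in> \<rat>" using qrat[OF bT] by (simp add: Rats_diff)
        then show False using xq unfolding d_def by simp
      qed
      define k where "k = \<lfloor>1/d\<rfloor>"
      have kb: "of_int k < 1/d" "1/d < of_int k + 1" using inv_floor_bounds[OF d0(1) dq] unfolding k_def by auto
      have "0 < nat k" using nat_floor_pos[OF d0] unfolding k_def .
      then have k0: "0 < k" by simp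
      have di: "1 / (of_int k + 1) < d" "d < 1 / of_int k" using inv_interval[OF k0 d0(1) kb] by auto
      have rx: "r x = Yl b (nat k)" using r_nl[OF x nnr] nl unfolding b_def k_def d_def by simp
      have pos1: "0 < 1 / (of_int k + 1 :: real)" using k0 by simp
      have aL: "q (Max (Lset x)) + e < q b - e" if ne: "Lset x \<noteq> {}"
      proof -
        have "Max (Lset x) + g \<le> b" using LU_order[OF x] nl ne unfolding b_def by blast
        then have "Max (Lset x) < b" using gpos by linarith
        then have "q (Max (Lset x)) + 2*e < q b" using qgap bT MaxL[OF ne] by blast
        then show ?thesis by linarith
      qed
      show ?thesis
      proof (intro exI conjI allI impI)
        show "max (q b - e) (q b - 1 / of_int k) < x" using di d0 unfolding d_def by auto
        show "x < q b - 1 / (of_int k + 1)" using di unfolding d_def by linarith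
        fix y assume y: "max (q b - e) (q b - 1 / of_int k) < y" "y < q b - 1 / (of_int k + 1)"
        have aL2: "q (Max (Lset x)) \<le> max (q b - e) (q b - 1 / of_int k)" if ne: "Lset x \<noteq> {}"
          using aL[OF ne] epos by linarith
        have same: "Lset y = Lset x \<and> Uset y = Uset x \<and> y \<notin> q ` T"
          by (rule LU_same[OF x aL2 _ y(1)]) (use pos1 y(2) in \<open>auto simp: b_def\<close>)
        have ynnr: "\<not> (Lset y \<noteq> {} \<and> y < q (Max (Lset y)) + e)"
        proof
          assume "Lset y \<noteq> {} \<and> y < q (Max (Lset y)) + e"
          then have "Lset x \<noteq> {}" "y < q (Max (Lset x)) + e" using same by auto
          then show False using aL y(1) by fastforce
        qed
        have ynl: "Uset y \<noteq> {} \<and> q (Min (Uset y)) - e < y" using same y nl unfolding b_def by auto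
        have "\<lfloor>1 / (q b - y)\<rfloor> = k"
          by (rule floor_inv_eq[OF k0]) (use y in auto)
        then have "r y = Yl b (nat k)" using r_nl[of y] same ynnr ynl unfolding b_def by simp
        then show "r y = r x" using rx by simp
      qed
    next
      case nnl: False
      have fl: "of_int \<lfloor>x\<rfloor> < x" "x < of_int \<lfloor>x\<rfloor> + 1" using irr_floor[OF xq] by auto
      show ?thesis
      proof (cases "Lset x = {}")
        case Le: True
        obtain t0 where t0: "t0 \<in> T" using neT by blast
        have Une: "Uset x \<noteq> {}" using LorU[OF x t0] Le by blast
        define b where "b = Min (Uset x)"
        have bT: "b \<in> T" using MinU[OF Une] unfolding b_def by auto
        have "q b - e \<in> \<rat>" using qrat[OF bT] erat by (simp add: Rats_diff)
        then have "x \<noteq> q b - e" using xq by auto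
        then have xb: "x < q b - e" using nnl Une unfolding b_def by auto
        have rx: "r x = Rl (nat (\<lfloor>x\<rfloor> mod int m))" using r_lr[OF x nnl Le] .
        show ?thesis
        proof (intro exI conjI allI impI)
          show "of_int \<lfloor>x\<rfloor> < x" using fl by simp
          show "x < min (of_int \<lfloor>x\<rfloor> + 1) (q b - e)" using fl xb by simp
          fix y assume y: "of_int \<lfloor>x\<rfloor> < y" "y < min (of_int \<lfloor>x\<rfloor> + 1) (q b - e)"
          have bU: "min (of_int \<lfloor>x\<rfloor> + 1) (q b - e) \<le> q (Min (Uset x))"
            using epos unfolding b_def by simp
          have same: "Lset y = Lset x \<and> Uset y = Uset x \<and> y \<notin> q ` T"
            by (rule LU_same[OF x _ _ y]) (use Le bU in auto)
          have ynnl: "\<not> (Uset y \<noteq> {} \<and> q (Min (Uset y)) - e < y)" using same y unfolding b_def by auto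
          have "\<lfloor>y\<rfloor> = \<lfloor>x\<rfloor>" using y by (simp add: floor_eq_iff)
          then have "r y = Rl (nat (\<lfloor>x\<rfloor> mod int m))" using r_lr[of y] same ynnl Le by simp
          then show "r y = r x" using rx by simp
        qed
      next
        case Lne: False
        define a where "a = Max (Lset x)"
        have aT: "a \<in> T" using MaxL Lne unfolding a_def by auto
        have "q a + e \<in> \<rat>" using qrat[OF aT] erat by (simp add: Rats_add)
        then have "x \<noteq> q a + e" using xq by auto
        then have xa: "q a + e < x" using nnr Lne unfolding a_def by auto
        show ?thesis
        proof (cases "Uset x = {}")
          case Ue: True
          have rx: "r x = Rr (nat (\<lfloor>x\<rfloor> mod int m))" using r_rr[OF x nnr Lne Ue] .
          show ?thesis
          proof (intro exI conjI allI impI)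
            show "max (of_int \<lfloor>x\<rfloor>) (q a + e) < x" using fl xa by simp
            show "x < of_int \<lfloor>x\<rfloor> + 1" using fl by simp
            fix y assume y: "max (of_int \<lfloor>x\<rfloor>) (q a + e) < y" "y < of_int \<lfloor>x\<rfloor> + 1"
            have aL: "q (Max (Lset x)) \<le> max (of_int \<lfloor>x\<rfloor>) (q a + e)"
              using epos unfolding a_def by simp
            have same: "Lset y = Lset x \<and> Uset y = Uset x \<and> y \<notin> q ` T"
              by (rule LU_same[OF x _ _ y]) (use Ue aL in auto)
            have ynnr: "\<not> (Lset y \<noteq> {} \<and> y < q (Max (Lset y)) + e)" using same y unfolding a_def by auto
            have "\<lfloor>y\<rfloor> = \<lfloor>x\<rfloor>" using y by (simp add: floor_eq_iff)
            then have "r y = Rr (nat (\<lfloor>x\<rfloor> mod int m))" using r_rr[of y] same ynnr Lne Ue by simp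
            then show "r y = r x" using rx by simp
          qed
        next
          case Une: False
          define b where "b = Min (Uset x)"
          have bT: "b \<in> T" using MinU[OF Une] unfolding b_def by auto
          have "q b - e \<in> \<rat>" using qrat[OF bT] erat by (simp add: Rats_diff)
          then have "x \<noteq> q b - e" using xq by auto
          then have xb: "x < q b - e" using nnl Une unfolding b_def by auto
          have rx: "r x = (Max (Lset x) + Min (Uset x)) / 2" using r_mid[OF x nnr nnl Lne Une] .
          show ?thesis
          proof (intro exI conjI allI impI)
            show "q a + e < x" using xa .
            show "x < q b - e" using xb .
            fix y assume y: "q a + e < y" "y < q b - e"
            have same: "Lset y = Lset x \<and> Uset y = Uset x \<and> y \<notin> q ` T"
              by (rule LU_same[OF x _ _ y]) (use epos in \<open>auto simp: a_def b_def\<close>)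
            have ynnr: "\<not> (Lset y \<noteq> {} \<and> y < q (Max (Lset y)) + e)" using same y unfolding a_def by auto
            have ynnl: "\<not> (Uset y \<noteq> {} \<and> q (Min (Uset y)) - e < y)" using same y unfolding b_def by auto
            have "r y = (Max (Lset x) + Min (Uset x)) / 2" using r_mid[of y] same ynnr ynnl Lne Une by simp
            then show "r y = r x" using rx by simp
          qed
        qed
      qed
    qed
  qed
qed

lemma big_nat: fixes c :: real obtains N :: nat where "c < real N" "0 < N"
proof -
  obtain N :: nat where "max c 0 < real N" using reals_Archimedean2 by blast
  then show ?thesis using that[of N] by (cases N) auto
qed

lemma AppR:
  assumes iT: "i \<in> T" and j: "j < m" and H: "\<forall>\<epsilon>>0. \<exists>y\<in>As j. i < y \<and> y < i + \<epsilon>" and ep: "\<epsilon> > 0"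
  shows "\<exists>x. q i < x \<and> x < q i + \<epsilon> \<and> r x \<in> As j"
proof -
  obtain N :: nat where N: "1/\<epsilon> + 1/e < real N" "0 < N" using big_nat by blast
  define k where "k = m * N + j"
  have "1 \<le> m" using mpos by simp
  then have "1 * N \<le> m * N" by (rule mult_le_mono1)
  then have kN: "N \<le> k" unfolding k_def by linarith
  have kmod: "k mod m = j" unfolding k_def using j by simp
  have kpos: "0 < k" using kN N(2) by linarith
  have kR: "real N \<le> real k" using kN by simp
  define d where "d = 1 / (real k + 1/2)"
  have d0: "0 < d" unfolding d_def by simp
  have dk: "d < 1 / real k" unfolding d_def using kpos by (simp add: field_simps)
  have Nk: "1 / real k \<le> 1 / real N" using kR N(2) by (simp add: frac_le)
  have p1: "0 < 1/\<epsilon>" "0 < 1/e" using ep epos by simp_all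
  have ie1: "1/\<epsilon> < real N" using N(1) p1 by linarith
  have ie2: "1/e < real N" using N(1) p1 by linarith
  note ie = ie1 ie2
  have "1 / real N < \<epsilon>" using ie(1) ep N(2) by (simp add: field_simps)
  then have de: "d < \<epsilon>" using dk Nk by linarith
  have "1 / real N < e" using ie(2) epos N(2) by (simp add: field_simps)
  then have dee: "d < e" using dk Nk by linarith
  define x where "x = q i + d"
  have Lchar: "t \<in> T \<Longrightarrow> q t < x \<longleftrightarrow> t \<le> i" for t
  proof -
    assume t: "t \<in> T"
    show ?thesis
    proof (cases "t \<le> i")
      case True
      then have "q t \<le> q i" using qle t iT by blast
      then show ?thesis using True d0 unfolding x_def by simp
    next
      case False
      then have "q i + 2*e < q t" using qgap iT t by simp
      then show ?thesis using False dee epos d0 unfolding x_def by simp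
    qed
  qed
  have xT: "x \<notin> q ` T"
  proof
    assume "x \<in> q ` T"
    then obtain t where t: "t \<in> T" "x = q t" by blast
    show False
    proof (cases "t \<le> i")
      case True
      then have "q t \<le> q i" using qle t iT by blast
      then show False using t d0 unfolding x_def by simp
    next
      case False
      then have "q i + 2*e < q t" using qgap iT t by simp
      then show False using t dee epos unfolding x_def by simp
    qed
  qed
  have Ls: "Lset x = {t \<in> T. t \<le> i}" unfolding Lset_def using Lchar by blast
  have Lne: "Lset x \<noteq> {}" using Ls iT by blast
  have Mx: "Max (Lset x) = i"
    by (rule Max_eqI) (use finT Ls iT in auto)
  have nr: "x < q (Max (Lset x)) + e" using Mx dee unfolding x_def by simp
  have fl: "\<lfloor>1 / (x - q i)\<rfloor> = int k" unfolding x_def d_def by simp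
  have rx: "r x = Yr i k" using r_nr[OF xT Lne nr] Mx fl by simp
  have hpos: "0 < hh k" using hh_pos kpos by blast
  obtain y where "y \<in> As j" "i < y" "y < i + hh k" using H hpos by blast
  then have "\<exists>y\<in>As (k mod m). i < y \<and> y < i + hh k" using kmod by blast
  then have "Yr i k \<in> As (k mod m)" by (rule Yr_mem)
  then have "r x \<in> As j" using rx kmod by simp
  moreover have "q i < x" "x < q i + \<epsilon>" using d0 de unfolding x_def by auto
  ultimately show ?thesis by blast
qed

lemma AppL:
  assumes iT: "i \<in> T" and j: "j < m" and H: "\<forall>\<epsilon>>0. \<exists>y\<in>As j. i - \<epsilon> < y \<and> y < i" and ep: "\<epsilon> > 0"
  shows "\<exists>x. q i - \<epsilon> < x \<and> x < q i \<and> r x \<in> As j"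
proof -
  obtain N :: nat where N: "1/\<epsilon> + 1/e < real N" "0 < N" using big_nat by blast
  define k where "k = m * N + j"
  have "1 \<le> m" using mpos by simp
  then have "1 * N \<le> m * N" by (rule mult_le_mono1)
  then have kN: "N \<le> k" unfolding k_def by linarith
  have kmod: "k mod m = j" unfolding k_def using j by simp
  have kpos: "0 < k" using kN N(2) by linarith
  have kR: "real N \<le> real k" using kN by simp
  define d where "d = 1 / (real k + 1/2)"
  have d0: "0 < d" unfolding d_def by simp
  have dk: "d < 1 / real k" unfolding d_def using kpos by (simp add: field_simps)
  have Nk: "1 / real k \<le> 1 / real N" using kR N(2) by (simp add: frac_le)
  have p1: "0 < 1/\<epsilon>" "0 < 1/e" using ep epos by simp_all
  have ie1: "1/\<epsilon> < real N" using N(1) p1 by linarith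
  have ie2: "1/e < real N" using N(1) p1 by linarith
  note ie = ie1 ie2
  have "1 / real N < \<epsilon>" using ie(1) ep N(2) by (simp add: field_simps)
  then have de: "d < \<epsilon>" using dk Nk by linarith
  have "1 / real N < e" using ie(2) epos N(2) by (simp add: field_simps)
  then have dee: "d < e" using dk Nk by linarith
  define x where "x = q i - d"
  have Uchar: "t \<in> T \<Longrightarrow> x < q t \<longleftrightarrow> i \<le> t" for t
  proof -
    assume t: "t \<in> T"
    show ?thesis
    proof (cases "i \<le> t")
      case True
      then have "q i \<le> q t" using qle t iT by blast
      then show ?thesis using True d0 unfolding x_def by simp
    next
      case False
      then have "q t + 2*e < q i" using qgap iT t by simp
      then show ?thesis using False dee epos d0 unfolding x_def by simp
    qed
  qed
  have xT: "x \<notin> q ` T"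
  proof
    assume "x \<in> q ` T"
    then obtain t where t: "t \<in> T" "x = q t" by blast
    show False
    proof (cases "i \<le> t")
      case True
      then have "q i \<le> q t" using qle t iT by blast
      then show False using t d0 unfolding x_def by simp
    next
      case False
      then have "q t + 2*e < q i" using qgap iT t by simp
      then show False using t dee epos unfolding x_def by simp
    qed
  qed
  have Us: "Uset x = {t \<in> T. i \<le> t}" unfolding Uset_def using Uchar by blast
  have Une: "Uset x \<noteq> {}" using Us iT by blast
  have Mn: "Min (Uset x) = i"
    by (rule Min_eqI) (use finT Us iT in auto)
  have nnr: "\<not> (Lset x \<noteq> {} \<and> x < q (Max (Lset x)) + e)"
  proof
    assume a: "Lset x \<noteq> {} \<and> x < q (Max (Lset x)) + e"
    have "Max (Lset x) + g \<le> Min (Uset x)" using LU_order[OF xT] a Une by blast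
    then have "Max (Lset x) < i" using Mn gpos by linarith
    then have "q (Max (Lset x)) + 2*e < q i" using qgap MaxL a iT by blast
    then show False using a dee unfolding x_def by simp
  qed
  have nl: "q (Min (Uset x)) - e < x" using Mn dee unfolding x_def by simp
  have fl: "\<lfloor>1 / (q i - x)\<rfloor> = int k" unfolding x_def d_def by simp
  have rx: "r x = Yl i k" using r_nl[OF xT nnr Une nl] Mn fl by simp
  have hpos: "0 < hh k" using hh_pos kpos by blast
  obtain y where "y \<in> As j" "i - hh k < y" "y < i" using H hpos by blast
  then have "\<exists>y\<in>As (k mod m). i - hh k < y \<and> y < i" using kmod by blast
  then have "Yl i k \<in> As (k mod m)" by (rule Yl_mem)
  then have "r x \<in> As j" using rx kmod by simp
  moreover have "q i - \<epsilon> < x" "x < q i" using d0 de unfolding x_def by auto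
  ultimately show ?thesis by blast
qed

lemma qMax: "t \<in> T \<Longrightarrow> q t \<le> q (Max T)"
  using qle finT neT by simp
lemma qMin: "t \<in> T \<Longrightarrow> q (Min T) \<le> q t"
  using qle finT neT by simp

lemma UnbR:
  assumes j: "j < m" and H: "\<forall>N. \<exists>y\<in>As j. N < y"
  shows "\<exists>x. N < x \<and> r x \<in> As j"
proof -
  obtain M :: nat where M: "\<bar>N\<bar> + \<bar>q (Max T)\<bar> + e + 1 < real M" "0 < M" using big_nat by blast
  define n where "n = int (m * M + j)"
  have "1 \<le> m" using mpos by simp
  then have "1 * M \<le> m * M" by (rule mult_le_mono1)
  then have "M \<le> m * M + j" by linarith
  then have "real M \<le> real (m * M + j)" by (simp only: of_nat_le_iff)
  then have nM: "real M \<le> of_int n" unfolding n_def by (simp only: of_int_of_nat_eq)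
  have nmod: "n mod int m = int j" unfolding n_def using j by (simp add: zmod_int)
  define x where "x = of_int n + (1/2::real)"
  have ab: "N \<le> \<bar>N\<bar>" "q (Max T) \<le> \<bar>q (Max T)\<bar>" "0 \<le> \<bar>N\<bar>" "0 \<le> \<bar>q (Max T)\<bar>" "0 < e" using epos by simp_all
  have xb1: "N < x" using M nM ab unfolding x_def by linarith
  have xb2: "q (Max T) + e < x" using M nM ab unfolding x_def by linarith
  note xb = xb1 xb2
  have MT: "Max T \<in> T" using finT neT by simp
  have all: "\<forall>t\<in>T. q t < x"
  proof
    fix t assume "t \<in> T"
    then have "q t \<le> q (Max T)" by (rule qMax)
    then show "q t < x" using xb(2) epos by linarith
  qed
  have Ls: "Lset x = T" unfolding Lset_def using all by blast
  have Us: "Uset x = {}" unfolding Uset_def using all by fastforce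
  have xT: "x \<notin> q ` T" using all by fastforce
  have nnr: "\<not> (Lset x \<noteq> {} \<and> x < q (Max (Lset x)) + e)" using Ls xb(2) by simp
  have Lne: "Lset x \<noteq> {}" using Ls neT by simp
  have fl: "\<lfloor>x\<rfloor> = n" unfolding x_def by simp
  have rx: "r x = Rr j" using r_rr[OF xT nnr Lne Us] fl nmod by simp
  obtain y where "y \<in> As j" "Max T < y" using H[rule_format, of "Max T"] by blast
  then have "\<exists>y\<in>As j. Max T < y" by blast
  then have "Rr j \<in> As j" by (rule Rr_mem)
  then have "r x \<in> As j" using rx by simp
  then have "N < x \<and> r x \<in> As j" using xb by simp
  then show ?thesis by (rule exI)
qed

lemma UnbL:
  assumes j: "j < m" and H: "\<forall>N. \<exists>y\<in>As j. y < N"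
  shows "\<exists>x. x < N \<and> r x \<in> As j"
proof -
  obtain M :: nat where M: "\<bar>N\<bar> + \<bar>q (Min T)\<bar> + e + real m + 1 < real M" "0 < M" using big_nat by blast
  define n where "n = int j - int m * int M"
  have nM: "of_int n \<le> real m - real M"
  proof -
    have "1 * int M \<le> int m * int M" by (rule mult_right_mono) (use mpos in auto)
    then have "n \<le> int m - int M" unfolding n_def using j by simp
    then have "real_of_int n \<le> real_of_int (int m - int M)" by (simp only: of_int_le_iff)
    then show ?thesis by simp
  qed
  have "n = int j + int m * (- int M)" unfolding n_def by simp
  then have "n mod int m = int j mod int m" by (simp only: mod_mult_self2)
  then have nmod: "n mod int m = int j" using j by simp
  define x where "x = of_int n + (1/2::real)"
  have ab: "- \<bar>N\<bar> \<le> N" "- \<bar>q (Min T)\<bar> \<le> q (Min T)" "0 \<le> \<bar>N\<bar>" "0 \<le> \<bar>q (Min T)\<bar>" "0 < e" using epos by simp_all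
  have xb1: "x < N" using M nM ab epos unfolding x_def by linarith
  have xb2: "x < q (Min T) - e" using M nM ab epos unfolding x_def by linarith
  note xb = xb1 xb2
  have all: "\<forall>t\<in>T. x < q t"
  proof
    fix t assume "t \<in> T"
    then have "q (Min T) \<le> q t" by (rule qMin)
    then show "x < q t" using xb(2) epos by linarith
  qed
  have Ls: "Lset x = {}" unfolding Lset_def using all by fastforce
  have Us: "Uset x = T" unfolding Uset_def using all by blast
  have xT: "x \<notin> q ` T" using all by fastforce
  have nnl: "\<not> (Uset x \<noteq> {} \<and> q (Min (Uset x)) - e < x)" using Us xb(2) by simp
  have fl: "\<lfloor>x\<rfloor> = n" unfolding x_def by simp
  have rx: "r x = Rl j" using r_lr[OF xT nnl Ls] fl nmod by simp
  obtain y where "y \<in> As j" "y < Min T" using H[rule_format, of "Min T"] by blast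
  then have "\<exists>y\<in>As j. y < Min T" by blast
  then have "Rl j \<in> As j" by (rule Rl_mem)
  then have "r x \<in> As j" using rx by simp
  then have "x < N \<and> r x \<in> As j" using xb1 by simp
  then show ?thesis by (rule exI)
qed

end


lemma subfms_trans: "\<psi> \<in> subfms \<phi> \<Longrightarrow> subfms \<psi> \<subseteq> subfms \<phi>"
  by (induction \<phi>) auto

lemma exists_q:
  fixes c :: real
  assumes c: "c > 0"
  shows "\<exists>q. (\<forall>t. q t \<in> \<rat>) \<and> (\<forall>t. \<bar>q t - t\<bar> < c) \<and> (\<forall>t. q (t + 1) = q t + 1)"
proof -
  define R where "R f = (SOME r. r \<in> \<rat> \<and> \<bar>r - f\<bar> < c)" for f :: real
  have R: "R f \<in> \<rat> \<and> \<bar>R f - f\<bar> < c" for f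
  proof -
    have "f - c < f + c" using c by simp
    then obtain r where "r \<in> \<rat>" "f - c < r" "r < f + c" using Rats_dense_in_real by blast
    then have "\<exists>r. r \<in> \<rat> \<and> \<bar>r - f\<bar> < c" by (intro exI[of _ r]) auto
    then show ?thesis unfolding R_def by (rule someI_ex)
  qed
  define q where "q t = of_int \<lfloor>t\<rfloor> + R (frac t)" for t
  have "\<forall>t. q t \<in> \<rat>" unfolding q_def using R by (simp add: Rats_add)
  moreover have "\<forall>t. \<bar>q t - t\<bar> < c"
  proof
    fix t
    have "q t - t = R (frac t) - frac t" unfolding q_def frac_def by simp
    then show "\<bar>q t - t\<bar> < c" using R by simp
  qed
  moreover have "\<forall>t. q (t + 1) = q t + 1"
  proof
    fix t :: real
    have "frac (t + 1) = frac t" by (simp add: frac_def)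
    moreover have "\<lfloor>t + 1\<rfloor> = \<lfloor>t\<rfloor> + 1" by simp
    ultimately show "q (t + 1) = q t + 1" unfolding q_def by simp
  qed
  ultimately show ?thesis by blast
qed

theorem lemma4p4:
  fixes \<phi> :: "'a fm"
  assumes "\<exists>v. ext v \<phi> \<noteq> {}"
  shows "\<exists>v. special (subfms \<phi>) v \<and> ext v \<phi> \<noteq> {}"
proof -
  obtain v x0 where x0: "x0 \<in> ext v \<phi>" using assms by blast
  define Dset where "Dset = {a. Dia a \<in> subfms \<phi>}"
  have finD: "finite Dset"
  proof -
    have "Dset = Dia -` subfms \<phi>" unfolding Dset_def by auto
    then show ?thesis using finite_vimageI[OF finite_subfms, of Dia \<phi>] by (simp add: inj_on_def)
  qed
  define Rel where "Rel = insert {} ((\<lambda>a. ext v a) ` Dset)"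
  have finRel: "finite Rel" unfolding Rel_def using finD by simp
  obtain xs where xs: "set xs = Rel" using finite_list[OF finRel] by blast
  define m where "m = length xs"
  define As where "As j = xs ! j" for j
  have mpos: "m > 0" using xs unfolding m_def Rel_def by (cases xs) auto
  have relj: "A \<in> Rel \<Longrightarrow> \<exists>j<m. As j = A" for A
    using xs unfolding m_def As_def by (metis in_set_conv_nth)
  define S where "S = insert x0 (Inf ` {A\<in>Rel. A \<noteq> {} \<and> bdd_below A} \<union> Sup ` {A\<in>Rel. A \<noteq> {} \<and> bdd_above A})"
  have finS: "finite S" unfolding S_def using finRel by simp
  define T where "T = S \<union> (\<lambda>t. t + 1) ` S \<union> (\<lambda>t. t - 1) ` S"
  have finT: "finite T" unfolding T_def using finS by simp
  have ST: "S \<subseteq> T" unfolding T_def by blast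
  have SpT: "t \<in> S \<Longrightarrow> t + 1 \<in> T" for t unfolding T_def by blast
  have SmT: "t \<in> S \<Longrightarrow> t - 1 \<in> T" for t unfolding T_def by blast
  have x0T: "x0 \<in> T" using ST unfolding S_def by blast
  define G where "G = insert 1 ((\<lambda>(t, u). u - t) ` {(t, u). t \<in> T \<and> u \<in> T \<and> t < u})"
  have finG: "finite G"
  proof -
    have "{(t, u). t \<in> T \<and> u \<in> T \<and> t < u} \<subseteq> T \<times> T" by auto
    then have "finite {(t, u). t \<in> T \<and> u \<in> T \<and> t < u}" using finT finite_subset by blast
    then show ?thesis unfolding G_def by simp
  qed
  define g where "g = Min G"
  have Gpos: "\<forall>x\<in>G. 0 < x" unfolding G_def by auto
  have gpos: "g > 0" unfolding g_def using finG Gpos by (simp add: G_def)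
  have gap: "t \<in> T \<Longrightarrow> u \<in> T \<Longrightarrow> t < u \<Longrightarrow> t + g \<le> u" for t u
  proof -
    assume a: "t \<in> T" "u \<in> T" "t < u"
    then have "u - t \<in> G" unfolding G_def by force
    then have "g \<le> u - t" unfolding g_def using finG by simp
    then show ?thesis by simp
  qed
  have "g / 4 > 0" using gpos by simp
  then obtain q where qQ: "\<forall>t. q t \<in> \<rat>" and qc: "\<forall>t. \<bar>q t - t\<bar> < g / 4" and q1: "\<forall>t. q (t + 1) = q t + 1"
    using exists_q by blast
  have qm1: "q (t - 1) = q t - 1" for t using q1[rule_format, of "t - 1"] by simp
  have "0 < min (g/4) 1" using gpos by simp
  then obtain e where eQ: "e \<in> \<rat>" and e0: "0 < e" and ee: "e < min (g/4) 1" using Rats_dense_in_real by blast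
  have qgap: "t \<in> T \<Longrightarrow> u \<in> T \<Longrightarrow> t < u \<Longrightarrow> q t + 2*e < q u" for t u
  proof -
    assume a: "t \<in> T" "u \<in> T" "t < u"
    have "t + g \<le> u" using gap[OF a] .
    moreover have a1: "\<bar>q t - t\<bar> < g/4" using qc by blast
    moreover have a2: "\<bar>q u - u\<bar> < g/4" using qc by blast
    moreover have "q t - t < g/4 \<and> -(q t - t) < g/4" using a1 by (simp only: abs_less_iff)
    moreover have "q u - u < g/4 \<and> -(q u - u) < g/4" using a2 by (simp only: abs_less_iff)
    ultimately have h: "t + g \<le> u" "q t - t < g/4" "q u - u < g/4" "-(q u - u) < g/4"
      by blast+
    have "e < g/4" using ee by simp
    then show ?thesis using h by linarith
  qed
  have neT: "T \<noteq> {}" using x0T by blast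
  interpret C: cons T q g e As m
    by unfold_locales (use finT neT gpos gap e0 ee eQ qgap qQ mpos in auto)
  let ?r = "C.r"
  have good: "\<forall>z. (\<exists>y. \<bar>z - y\<bar> > 1 \<and> ?r y \<in> A) \<longleftrightarrow> (\<exists>y\<in>A. \<bar>?r z - y\<bar> > 1)" if AR: "A \<in> Rel" for A
  proof
    fix z
    obtain j where j: "j < m" "As j = A" using relj[OF AR] by blast
    have left: "(\<exists>y. y < z - 1 \<and> ?r y \<in> A) \<longleftrightarrow> (\<exists>y\<in>A. y < ?r z - 1)"
    proof (cases "A = {}")
      case True then show ?thesis by simp
    next
      case ne: False
      show ?thesis
      proof (cases "bdd_below A")
        case bd: True
        have iS: "Inf A \<in> S" unfolding S_def using AR ne bd by blast
        have iT: "Inf A \<in> T" using iS ST by blast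
        have i1T: "Inf A + 1 \<in> T" using SpT[OF iS] .
        show ?thesis
        proof (rule side_left[OF ne bd])
          show "\<And>x. ?r x < Inf A \<longleftrightarrow> x < q (Inf A)" using C.R1[OF iT] by blast
          show "\<And>x. Inf A + 1 < ?r x \<longleftrightarrow> q (Inf A) + 1 < x" using C.R1[OF i1T] q1 by simp
          show "?r (q (Inf A)) = Inf A" using C.r_at[OF iT] .
          assume nA: "Inf A \<notin> A"
          have H: "\<forall>\<epsilon>>0. \<exists>y\<in>As j. Inf A < y \<and> y < Inf A + \<epsilon>"
          proof (intro allI impI)
            fix \<epsilon> :: real assume ep: "\<epsilon> > 0"
            have "Inf A < Inf A + \<epsilon>" using ep by simp
            then obtain y where y: "y \<in> A" "y < Inf A + \<epsilon>" using cInf_less_iff[OF ne bd] by blast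
            have "Inf A \<le> y" using y(1) bd by (simp add: cInf_lower)
            moreover have "Inf A \<noteq> y" using y(1) nA by blast
            ultimately show "\<exists>y\<in>As j. Inf A < y \<and> y < Inf A + \<epsilon>" using y j by force
          qed
          show "\<forall>\<epsilon>>0. \<exists>x. q (Inf A) < x \<and> x < q (Inf A) + \<epsilon> \<and> ?r x \<in> A"
            using C.AppR[OF iT j(1) H] j(2) by blast
        qed
      next
        case nbd: False
        have unb: "\<forall>N. \<exists>y\<in>A. y < N" using nbd unfolding bdd_below_def by (meson not_le)
        have "\<exists>y\<in>A. y < ?r z - 1" using unb by blast
        moreover have "\<exists>y. y < z - 1 \<and> ?r y \<in> A" using C.UnbL[OF j(1), of "z - 1"] unb j(2) by blast
        ultimately show ?thesis by blast
      qed
    qed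
    have right: "(\<exists>y. z + 1 < y \<and> ?r y \<in> A) \<longleftrightarrow> (\<exists>y\<in>A. ?r z + 1 < y)"
    proof (cases "A = {}")
      case True then show ?thesis by simp
    next
      case ne: False
      show ?thesis
      proof (cases "bdd_above A")
        case bd: True
        have "A \<in> {A \<in> Rel. A \<noteq> {} \<and> bdd_above A}" using AR ne bd by blast
        then have "Sup A \<in> Sup ` {A \<in> Rel. A \<noteq> {} \<and> bdd_above A}" by (rule imageI)
        then have iS: "Sup A \<in> S" unfolding S_def by blast
        have iT: "Sup A \<in> T" using iS ST by blast
        have i1T: "Sup A - 1 \<in> T" using SmT[OF iS] .
        show ?thesis
        proof (rule side_right[OF ne bd])
          show "\<And>x. Sup A < ?r x \<longleftrightarrow> q (Sup A) < x" using C.R1[OF iT] by blast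
          show "\<And>x. ?r x < Sup A - 1 \<longleftrightarrow> x < q (Sup A) - 1" using C.R1[OF i1T] qm1 by simp
          show "?r (q (Sup A)) = Sup A" using C.r_at[OF iT] .
          assume nA: "Sup A \<notin> A"
          have H: "\<forall>\<epsilon>>0. \<exists>y\<in>As j. Sup A - \<epsilon> < y \<and> y < Sup A"
          proof (intro allI impI)
            fix \<epsilon> :: real assume ep: "\<epsilon> > 0"
            have "Sup A - \<epsilon> < Sup A" using ep by simp
            then obtain y where y: "y \<in> A" "Sup A - \<epsilon> < y" using less_cSup_iff[OF ne bd] by blast
            have "y \<le> Sup A" using y(1) bd by (simp add: cSup_upper)
            moreover have "Sup A \<noteq> y" using y(1) nA by blast
            ultimately show "\<exists>y\<in>As j. Sup A - \<epsilon> < y \<and> y < Sup A" using y j by force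
          qed
          show "\<forall>\<epsilon>>0. \<exists>x. q (Sup A) - \<epsilon> < x \<and> x < q (Sup A) \<and> ?r x \<in> A"
            using C.AppL[OF iT j(1) H] j(2) by blast
        qed
      next
        case nbd: False
        have unb: "\<forall>N. \<exists>y\<in>A. N < y" using nbd unfolding bdd_above_def by (meson not_le)
        have "\<exists>y\<in>A. ?r z + 1 < y" using unb by blast
        moreover have "\<exists>y. z + 1 < y \<and> ?r y \<in> A" using C.UnbR[OF j(1), of "z + 1"] unb j(2) by blast
        ultimately show ?thesis by blast
      qed
    qed
    have e1: "(\<exists>y. \<bar>z - y\<bar> > 1 \<and> ?r y \<in> A) \<longleftrightarrow>
        (\<exists>y. y < z - 1 \<and> ?r y \<in> A) \<or> (\<exists>y. z + 1 < y \<and> ?r y \<in> A)"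
      by (auto simp: abs_real_def split: if_splits) (smt (verit))+
    have e2: "(\<exists>y\<in>A. \<bar>?r z - y\<bar> > 1) \<longleftrightarrow> (\<exists>y\<in>A. y < ?r z - 1) \<or> (\<exists>y\<in>A. ?r z + 1 < y)"
      by (auto simp: abs_real_def split: if_splits) (smt (verit))+
    show "(\<exists>y. \<bar>z - y\<bar> > 1 \<and> ?r y \<in> A) \<longleftrightarrow> (\<exists>y\<in>A. \<bar>?r z - y\<bar> > 1)"
      using e1 e2 left right by blast
  qed
  define w where "w p = ?r -` v p" for p
  have transfer: "\<psi> \<in> subfms \<phi> \<Longrightarrow> sat w x \<psi> \<longleftrightarrow> sat v (?r x) \<psi>" for \<psi> x
  proof -
    assume psi: "\<psi> \<in> subfms \<phi>"
    have "sat (\<lambda>p. ?r -` v p) x \<psi> \<longleftrightarrow> sat v (?r x) \<psi>"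
    proof (rule sat_transfer)
      fix a assume "Dia a \<in> subfms \<psi>"
      then have "Dia a \<in> subfms \<phi>" using subfms_trans[OF psi] by blast
      then have "ext v a \<in> Rel" unfolding Rel_def Dset_def by blast
      then show "\<forall>x. (\<exists>y. \<bar>x - y\<bar> > 1 \<and> ?r y \<in> ext v a) \<longleftrightarrow> (\<exists>y\<in>ext v a. \<bar>?r x - y\<bar> > 1)"
        by (rule good)
    qed
    then show ?thesis unfolding w_def by simp
  qed
  have pre: "\<psi> \<in> subfms \<phi> \<Longrightarrow> ext w \<psi> = ?r -` ext v \<psi>" for \<psi>
    using transfer unfolding ext_def by auto
  have nonempty: "ext w \<phi> \<noteq> {}"
  proof -
    have "sat w (q x0) \<phi>" using transfer[OF self_subfms] C.r_at[OF x0T] x0 unfolding ext_def by simp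
    then show ?thesis unfolding ext_def by blast
  qed
  have special: "special (subfms \<phi>) w"
    unfolding special_def
  proof
    fix z assume "z \<in> X_v (subfms \<phi>) w"
    then obtain A where A: "A \<in> B_v (subfms \<phi>) w" and zi: "is_inf z A \<or> is_sup z A"
      unfolding X_v_def by blast
    have "\<exists>B. A = ?r -` B"
    proof (rule bool_gen_preimage)
      show "A \<in> bool_gen ((\<lambda>\<psi>. ext w \<psi>) ` subfms \<phi>)" using A unfolding B_v_def .
      fix X assume "X \<in> (\<lambda>\<psi>. ext w \<psi>) ` subfms \<phi>"
      then obtain \<psi> where "\<psi> \<in> subfms \<phi>" "X = ext w \<psi>" by blast
      then show "\<exists>B. X = ?r -` B" using pre by blast
    qed
    then obtain B where B: "A = ?r -` B" by blast
    show "z \<in> \<rat>"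
    proof (cases "is_inf z A")
      case True
      then show ?thesis using locconst_inf[OF C.R2] B by blast
    next
      case False
      then have "is_sup z A" using zi by blast
      then show ?thesis using locconst_sup[OF C.R2] B by blast
    qed
  qed
  show ?thesis using special nonempty by blast
qed

end
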